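(* Let $S$ be a surface, $\phi:S\to\mathbf{Ein}^{1,1}$ an immersion with $\phi^*\tau$ trivial, $g$ a $C^2$ Lorentz metric on $S$ compatible with the induced split structure, $\sigma$ an isotropic surface with $[\sigma]=\phi$ and $g(u,v)=\langle\mathrm D_u\sigma,\mathrm D_v\sigma\rangle$, and $\eta$ its dual isotropic surface. Let $\psi=(\frac{\sqrt2}{2}(\sigma-\eta),\frac{\sqrt2}{2}(\sigma+\eta))$ be the $g$-Epstein surface and $\pi$ the projection to the base point. Then $\pi\circ\psi=\frac{\sqrt2}{2}(\sigma-\eta)$ is an envelope of the family of horospheres $\mathcal H(g)=\{H(\sigma(s)):s\in S\}$, i.e. for every $s\in S$, $\pi\circ\psi(s)\in H(\sigma(s))$ and $\mathrm d_s(\pi\circ\psi)(\mathsf T_sS)\subset\mathsf T_{\pi\circ\psi(s)}H(\sigma(s))$.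
   Context: $W$ is a real $4$-dimensional vector space with a quadratic form of signature $(2,2)$ and polar form $\langle\cdot,\cdot\rangle$; $\mathbf H^{2,1}_+=\{x:\langle x,x\rangle=-1\}$, $\mathbf{Ein}^{1,1}=\{[x]\in\mathbf P(W):\langle x,x\rangle=0\}$ with tautological line bundle $\tau$ and canonical split structure given (via a Segre identification with $\mathbf{RP}^1\times\mathbf{RP}^1$) by the fibers of the two projections; compatible metrics have these leaves isotropic with the positivity convention on oriented split bases. An isotropic surface is an immersion $\sigma:S\to W$ with $\langle\sigma,\sigma\rangle=0$ and $\sigma(s)$ transverse to the image of $\mathsf T_s\sigma$; its dual $\eta$ satisfies $\langle\eta,\sigma\rangle=1$, $\langle\eta,\eta\rangle=0$, $\langle\eta,\mathrm D_u\sigma\rangle=0$. For a nonzero isotropic vector $x_0\in W$, the horosphere is $H(x_0)=\{p\in\mathbf H^{2,1}_+:\langle x_0,p\rangle=-\frac{\sqrt2}{2}\}$, whose tangent space at $p$ is $\operatorname{span}\{x_0,p\}^\perp$. *)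

theory Defs
  imports "HOL-Analysis.Analysis"
begin

text \<open>Model of W: the space of real 2x2 matrices with quadratic form q(x) = - det x,
  which has signature (2,2). Its isotropic cone projectivizes to the rank-one matrices,
  and the Segre identification RP1 x RP1 -> Ein is ([a],[b]) |-> [a b^T].\<close>

type_synonym W = "real^2^2"

definition wform :: "W \<Rightarrow> W \<Rightarrow> real" where
  "wform x y = - ((x$1$1 * y$2$2 + x$2$2 * y$1$1 - x$1$2 * y$2$1 - x$2$1 * y$1$2) / 2)"

definition Hpos :: "W set" where
  "Hpos = {x. wform x x = -1}"

definition horosphere :: "W \<Rightarrow> W set" where
  "horosphere x0 = {p \<in> Hpos. wform x0 p = - (sqrt 2 / 2)}"

definition horo_tangent :: "W \<Rightarrow> W \<Rightarrow> W set" where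
  "horo_tangent x0 p = {v. \<forall>w \<in> span {x0, p}. wform v w = 0}"

definition isotropic_surface ::
  "(real^2) set \<Rightarrow> ((real^2) \<Rightarrow> W) \<Rightarrow> ((real^2) \<Rightarrow> (real^2) \<Rightarrow> W) \<Rightarrow> bool" where
  "isotropic_surface S \<sigma> D\<sigma> \<longleftrightarrow>
     (\<forall>s\<in>S. (\<sigma> has_derivative D\<sigma> s) (at s) \<and> inj (D\<sigma> s)
        \<and> wform (\<sigma> s) (\<sigma> s) = 0 \<and> \<sigma> s \<notin> range (D\<sigma> s))"

definition dual_surface ::
  "(real^2) set \<Rightarrow> ((real^2) \<Rightarrow> W) \<Rightarrow> ((real^2) \<Rightarrow> (real^2) \<Rightarrow> W) \<Rightarrow> ((real^2) \<Rightarrow> W) \<Rightarrow> bool" where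
  "dual_surface S \<sigma> D\<sigma> \<eta> \<longleftrightarrow>
     (\<forall>s\<in>S. wform (\<eta> s) (\<sigma> s) = 1 \<and> wform (\<eta> s) (\<eta> s) = 0
        \<and> (\<forall>u. wform (\<eta> s) (D\<sigma> s u) = 0))"

text \<open>Split structure induced by phi = [sigma] via the Segre identification:
  a tangent vector u is along a leaf of the first (resp. second) projection iff
  D sigma(u) = w b^T (resp. a w^T) where sigma(s) = a b^T, i.e. iff
  ker sigma(s) <= ker D sigma(u) (resp. the same for transposes).\<close>
definition leaf1_dir :: "W \<Rightarrow> W \<Rightarrow> bool" where
  "leaf1_dir M V \<longleftrightarrow> (\<forall>x. M *v x = 0 \<longrightarrow> V *v x = 0)"

definition leaf2_dir :: "W \<Rightarrow> W \<Rightarrow> bool" where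
  "leaf2_dir M V \<longleftrightarrow> (\<forall>x. transpose M *v x = 0 \<longrightarrow> transpose V *v x = 0)"

definition lorentz_form :: "((real^2) \<Rightarrow> (real^2) \<Rightarrow> real) \<Rightarrow> bool" where
  "lorentz_form B \<longleftrightarrow> bilinear B \<and> (\<forall>u v. B u v = B v u)
      \<and> (\<exists>u. B u u > 0) \<and> (\<exists>v. B v v < 0)"

definition compatible_metric ::
  "(real^2) set \<Rightarrow> ((real^2) \<Rightarrow> W) \<Rightarrow> ((real^2) \<Rightarrow> (real^2) \<Rightarrow> W)
    \<Rightarrow> ((real^2) \<Rightarrow> (real^2) \<Rightarrow> (real^2) \<Rightarrow> real) \<Rightarrow> bool" where
  "compatible_metric S \<sigma> D\<sigma> g \<longleftrightarrow>
     (\<forall>s\<in>S. lorentz_form (g s)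
        \<and> (\<forall>u. leaf1_dir (\<sigma> s) (D\<sigma> s u) \<longrightarrow> g s u u = 0)
        \<and> (\<forall>u. leaf2_dir (\<sigma> s) (D\<sigma> s u) \<longrightarrow> g s u u = 0))"

definition epstein :: "((real^2) \<Rightarrow> W) \<Rightarrow> ((real^2) \<Rightarrow> W) \<Rightarrow> (real^2) \<Rightarrow> W \<times> W" where
  "epstein \<sigma> \<eta> s = ((sqrt 2 / 2) *\<^sub>R (\<sigma> s - \<eta> s), (sqrt 2 / 2) *\<^sub>R (\<sigma> s + \<eta> s))"

end

theory Submission
  imports Defs
begin

lemma wform_sym: "wform x y = wform y x" unfolding wform_def by argo
lemma wform_bil: "bilinear wform"
  unfolding bilinear_def by (auto intro!: linearI simp: wform_def field_simps)
lemma wform_bb: "bounded_bilinear wform"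
  using wform_bil bilinear_conv_bounded_bilinear by blast
lemma orth_span: assumes "wform v a = 0" "wform v b = 0" "w \<in> span {a,b}" shows "wform v w = 0"
proof -
  have "linear (wform v)" using wform_bil unfolding bilinear_def by blast
  hence "subspace {w. wform v w = 0}" unfolding subspace_def by (simp add: linear_0 linear_add linear_scale)
  thus ?thesis using assms span_minimal[of "{a,b}" "{w. wform v w = 0}"] by auto
qed
lemma zero_deriv:
  fixes f :: "real^2 \<Rightarrow> real"
  assumes "open S" "s \<in> S" "(f has_derivative f') (at s)" "\<And>x. x \<in> S \<Longrightarrow> f x = c"
  shows "f' u = 0"
proof -
  have "((\<lambda>_. c) has_derivative (\<lambda>_. 0)) (at s)" by simp
  hence "(f has_derivative (\<lambda>_. 0)) (at s)"
    by (rule has_derivative_transform_within_open[OF _ assms(1,2)]) (use assms(4) in auto)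
  hence "f' = (\<lambda>_. 0)" using assms(3) has_derivative_unique by blast
  thus ?thesis by simp
qed

lemmas wb = bounded_bilinear.diff_left[OF wform_bb] bounded_bilinear.diff_right[OF wform_bb]
  bounded_bilinear.scaleR_left[OF wform_bb] bounded_bilinear.scaleR_right[OF wform_bb]

theorem mainTheorem16:
  fixes S :: "(real^2) set"
    and \<sigma> \<eta> :: "real^2 \<Rightarrow> real^2^2"
    and D\<sigma> :: "real^2 \<Rightarrow> real^2 \<Rightarrow> real^2^2"
    and g :: "real^2 \<Rightarrow> real^2 \<Rightarrow> real^2 \<Rightarrow> real"
  assumes "open S"
    and "isotropic_surface S \<sigma> D\<sigma>"
    and "\<And>s u v. s \<in> S \<Longrightarrow> g s u v = wform (D\<sigma> s u) (D\<sigma> s v)"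
    and "compatible_metric S \<sigma> D\<sigma> g"
    and "dual_surface S \<sigma> D\<sigma> \<eta>"
    and "\<eta> differentiable_on S"
  shows "\<forall>s\<in>S. (fst \<circ> epstein \<sigma> \<eta>) s = (sqrt 2 / 2) *\<^sub>R (\<sigma> s - \<eta> s)
      \<and> (fst \<circ> epstein \<sigma> \<eta>) s \<in> horosphere (\<sigma> s)
      \<and> (fst \<circ> epstein \<sigma> \<eta>) differentiable (at s)
      \<and> range (frechet_derivative (fst \<circ> epstein \<sigma> \<eta>) (at s))
          \<subseteq> horo_tangent (\<sigma> s) ((fst \<circ> epstein \<sigma> \<eta>) s)"
proof
  fix s assume sS: "s \<in> S"
  define c :: real where "c = sqrt 2 / 2"
  have cc: "c * c = 1/2" unfolding c_def by (simp add: field_simps)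
  have P: "fst \<circ> epstein \<sigma> \<eta> = (\<lambda>x. c *\<^sub>R (\<sigma> x - \<eta> x))"
    by (auto simp: epstein_def c_def)
  define D\<eta> where "D\<eta> = frechet_derivative \<eta> (at s)"
  have "\<eta> differentiable (at s)"
    using assms(6) sS assms(1) by (simp add: differentiable_on_eq_differentiable_at)
  hence h\<eta>: "(\<eta> has_derivative D\<eta>) (at s)" unfolding D\<eta>_def using frechet_derivative_works by blast
  have h\<sigma>: "(\<sigma> has_derivative D\<sigma> s) (at s)" and ss0: "\<And>x. x \<in> S \<Longrightarrow> wform (\<sigma> x) (\<sigma> x) = 0"
    using assms(2) sS unfolding isotropic_surface_def by auto
  have es: "\<And>x. x \<in> S \<Longrightarrow> wform (\<eta> x) (\<sigma> x) = 1" and ee: "\<And>x. x \<in> S \<Longrightarrow> wform (\<eta> x) (\<eta> x) = 0"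
    and eD: "\<And>u. wform (\<eta> s) (D\<sigma> s u) = 0"
    using assms(5) sS unfolding dual_surface_def by auto
  have hP: "(fst \<circ> epstein \<sigma> \<eta> has_derivative (\<lambda>u. c *\<^sub>R (D\<sigma> s u - D\<eta> u))) (at s)"
    unfolding P by (intro derivative_intros h\<sigma> h\<eta>)
  have d1: "wform (\<sigma> s) (D\<sigma> s u) + wform (D\<sigma> s u) (\<sigma> s) = 0" for u
    by (rule zero_deriv[OF assms(1) sS bounded_bilinear.FDERIV[OF wform_bb h\<sigma> h\<sigma>] ss0])
  have d2: "wform (\<eta> s) (D\<sigma> s u) + wform (D\<eta> u) (\<sigma> s) = 0" for u
    by (rule zero_deriv[OF assms(1) sS bounded_bilinear.FDERIV[OF wform_bb h\<eta> h\<sigma>] es])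
  have d3: "wform (\<eta> s) (D\<eta> u) + wform (D\<eta> u) (\<eta> s) = 0" for u
    by (rule zero_deriv[OF assms(1) sS bounded_bilinear.FDERIV[OF wform_bb h\<eta> h\<eta>] ee])
  have A: "wform (D\<sigma> s u) (\<sigma> s) = 0" for u using d1[of u] wform_sym by simp
  have B: "wform (D\<eta> u) (\<sigma> s) = 0" for u using d2[of u] eD by simp
  have C: "wform (D\<eta> u) (\<eta> s) = 0" for u using d3[of u] wform_sym by simp
  have E: "wform (D\<sigma> s u) (\<eta> s) = 0" for u using eD wform_sym by metis
  have fd: "frechet_derivative (fst \<circ> epstein \<sigma> \<eta>) (at s) = (\<lambda>u. c *\<^sub>R (D\<sigma> s u - D\<eta> u))"
    using frechet_derivative_at[OF hP] by simp
  have se: "wform (\<sigma> s) (\<eta> s) = 1" using es[OF sS] wform_sym by metis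
  show "(fst \<circ> epstein \<sigma> \<eta>) s = (sqrt 2 / 2) *\<^sub>R (\<sigma> s - \<eta> s)
      \<and> (fst \<circ> epstein \<sigma> \<eta>) s \<in> horosphere (\<sigma> s)
      \<and> (fst \<circ> epstein \<sigma> \<eta>) differentiable (at s)
      \<and> range (frechet_derivative (fst \<circ> epstein \<sigma> \<eta>) (at s))
          \<subseteq> horo_tangent (\<sigma> s) ((fst \<circ> epstein \<sigma> \<eta>) s)"
  proof (intro conjI)
    show "(fst \<circ> epstein \<sigma> \<eta>) s = (sqrt 2 / 2) *\<^sub>R (\<sigma> s - \<eta> s)" by (simp add: P c_def)
    have "wform (c *\<^sub>R (\<sigma> s - \<eta> s)) (c *\<^sub>R (\<sigma> s - \<eta> s)) = -1"
      using ss0[OF sS] ee[OF sS] es[OF sS] se cc by (simp add: wb algebra_simps)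
    moreover have "wform (\<sigma> s) (c *\<^sub>R (\<sigma> s - \<eta> s)) = - c"
      using ss0[OF sS] se by (simp add: wb algebra_simps)
    ultimately show "(fst \<circ> epstein \<sigma> \<eta>) s \<in> horosphere (\<sigma> s)"
      by (simp add: P horosphere_def Hpos_def c_def)
    show "(fst \<circ> epstein \<sigma> \<eta>) differentiable (at s)" using hP differentiable_def by blast
    show "range (frechet_derivative (fst \<circ> epstein \<sigma> \<eta>) (at s))
          \<subseteq> horo_tangent (\<sigma> s) ((fst \<circ> epstein \<sigma> \<eta>) s)"
    proof (unfold fd horo_tangent_def, intro subsetI CollectI ballI)
      fix v w assume "v \<in> range (\<lambda>u. c *\<^sub>R (D\<sigma> s u - D\<eta> u))"
        and w: "w \<in> span {\<sigma> s, (fst \<circ> epstein \<sigma> \<eta>) s}"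
      then obtain u where v: "v = c *\<^sub>R (D\<sigma> s u - D\<eta> u)" by auto
      show "wform v w = 0" unfolding v
      proof (rule orth_span[OF _ _ w])
        show "wform (c *\<^sub>R (D\<sigma> s u - D\<eta> u)) (\<sigma> s) = 0" using A B by (simp add: wb)
        show "wform (c *\<^sub>R (D\<sigma> s u - D\<eta> u)) ((fst \<circ> epstein \<sigma> \<eta>) s) = 0"
          using A B C E by (simp add: wb P)
      qed
    qed
  qed
qed

end
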